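(* Let $T_0 \in \mathcal{G}(X)$ be fixed. If $\mathcal{R}(Z) \cap \mathcal{G}_{T_0}$ is dense in $\mathcal{G}_{T_0}$, then $\mathcal{S}_{T_0}$ is a first category subset of $\mathcal{G}_{T_0}$.
   Context: Let $(X,m)$ and $(Y,\nu)$ both be the unit interval with Lebesgue measure, and $(Z,\mu) = (X\times Y, m\times\nu)$. For a probability space $W$, $\mathcal{G}(W)$ denotes the set of invertible measure-preserving transformations of $W$, equipped with the weak topology ($T_n \to T$ iff $\mu(T_nE \triangle TE) \to 0$ for every measurable $E$). For $T_0 \in \mathcal{G}(X)$, $\mathcal{G}_{T_0} \subset \mathcal{G}(Z)$ is the set of extensions of $T_0$ through the projection $Z\to X$, i.e. transformations of the form $T(x,y) = (T_0x, T_x y)$ with $T_x \in \mathcal{G}(Y)$; it carries the (relative) weak topology. $T_0$ is also identified with $T_0 \times \mathrm{id}_Y$ on $Z$. A transformation $T$ on a space $W$ is rigid if there is a subsequence $n_k$ with $T^{n_k} \to \mathrm{id}_W$ strongly (as Koopman operators on $L^2(W)$); $\mathcal{R}(Z)$ is the set of rigid transformations of $Z$. $\mathbb{E}(\cdot|X)$ denotes conditional expectation onto the $\sigma$-algebra of sets $B\times Y$ (viewed as functions on $X$). $L^2(Z|X)$ is the space of $f \in L^2(Z)$ with $\|f\|_{L^2(Z|X)} := \mathbb{E}(|f|^2|X)^{1/2} \in L^\infty(X)$. $T\in\mathcal{G}_{T_0}$ is a (strongly) mixing extension of $T_0$ if for all $f,g \in L^2(Z|X)$, $\lim_{n\to\infty}\|\mathbb{E}(T^n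 f\cdot \overline{g}|X) - T_0^n\mathbb{E}(f|X)\,\mathbb{E}(\overline{g}|X)\|_{L^2(X)} = 0$, where $T^n f = f\circ T^n$. $\mathcal{S}_{T_0}$ denotes the set of strongly mixing extensions of $T_0$. *)

theory Defs
  imports "HOL-Analysis.Analysis" "HOL-Probability.Probability"
begin

definition UI :: "real measure" where
  "UI = restrict_space lborel {0..1}"

definition ZZ :: "(real \<times> real) measure" where
  "ZZ = UI \<Otimes>\<^sub>M UI"

definition MPT :: "'a measure \<Rightarrow> ('a \<Rightarrow> 'a) set" where
  "MPT M = {T. bij_betw T (space M) (space M) \<and> T \<in> measurable M M
              \<and> the_inv_into (space M) T \<in> measurable M M \<and> distr M M T = M}"

definition weak_top :: "'a measure \<Rightarrow> ('a \<Rightarrow> 'a) topology" where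
  "weak_top M = topology_generated_by
     {{S \<in> MPT M. measure M ((S ` E - T ` E) \<union> (T ` E - S ` E)) < e} | T E e.
        T \<in> MPT M \<and> E \<in> sets M \<and> e > 0}"

definition ext_set :: "(real \<Rightarrow> real) \<Rightarrow> (real \<times> real \<Rightarrow> real \<times> real) set" where
  "ext_set T0 = {T \<in> MPT ZZ.
      (\<forall>x\<in>{0..1}. \<forall>y\<in>{0..1}. fst (T (x, y)) = T0 x)
    \<and> (\<forall>x\<in>{0..1}. (\<lambda>y. snd (T (x, y))) \<in> MPT UI)}"

definition rigid :: "'a measure \<Rightarrow> ('a \<Rightarrow> 'a) \<Rightarrow> bool" where
  "rigid M T \<longleftrightarrow> (\<exists>n::nat \<Rightarrow> nat. strict_mono n \<and>
     (\<forall>f::'a \<Rightarrow> complex. f \<in> borel_measurable M \<and> integrable M (\<lambda>x. (cmod (f x))\<^sup>2) \<longrightarrow>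
        (\<lambda>k. sqrt (\<integral>x. (cmod (f ((T ^^ n k) x) - f x))\<^sup>2 \<partial>M)) \<longlonglongrightarrow> 0))"

definition rigid_set :: "'a measure \<Rightarrow> ('a \<Rightarrow> 'a) set" where
  "rigid_set M = {T \<in> MPT M. rigid M T}"

definition Xalg :: "(real \<times> real) measure" where
  "Xalg = vimage_algebra (space ZZ) fst UI"

definition cond_exp_c :: "'a measure \<Rightarrow> 'a measure \<Rightarrow> ('a \<Rightarrow> complex) \<Rightarrow> 'a \<Rightarrow> complex" where
  "cond_exp_c M F f = (\<lambda>z. complex_of_real (real_cond_exp M F (\<lambda>x. Re (f x)) z)
                         + \<i> * complex_of_real (real_cond_exp M F (\<lambda>x. Im (f x)) z))"

definition L2rel :: "(real \<times> real \<Rightarrow> complex) \<Rightarrow> bool" where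
  "L2rel f \<longleftrightarrow> f \<in> borel_measurable ZZ \<and> integrable ZZ (\<lambda>z. (cmod (f z))\<^sup>2)
     \<and> (\<exists>C. AE z in ZZ. real_cond_exp ZZ Xalg (\<lambda>w. (cmod (f w))\<^sup>2) z \<le> C)"

text \<open>Mixing extension.  Functions on X are lifted to X x Y (constant in y); since the
  second factor is a probability space, the L^2(X) norm equals the L^2(Z) norm of the lift.\<close>
definition mixing_ext :: "(real \<Rightarrow> real) \<Rightarrow> (real \<times> real \<Rightarrow> real \<times> real) \<Rightarrow> bool" where
  "mixing_ext T0 T \<longleftrightarrow> (\<forall>f g. L2rel f \<and> L2rel g \<longrightarrow>
     (\<lambda>n. sqrt (\<integral>z. (cmod (cond_exp_c ZZ Xalg (\<lambda>w. f ((T ^^ n) w) * cnj (g w)) z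
                         - cond_exp_c ZZ Xalg f ((T0 ^^ n) (fst z), snd z)
                           * cond_exp_c ZZ Xalg (\<lambda>w. cnj (g w)) z))\<^sup>2 \<partial>ZZ)) \<longlonglongrightarrow> 0)"

definition mixing_ext_set :: "(real \<Rightarrow> real) \<Rightarrow> (real \<times> real \<Rightarrow> real \<times> real) set" where
  "mixing_ext_set T0 = {T \<in> ext_set T0. mixing_ext T0 T}"

definition nowhere_dense_in :: "'a topology \<Rightarrow> 'a set \<Rightarrow> bool" where
  "nowhere_dense_in U S \<longleftrightarrow> S \<subseteq> topspace U \<and> U interior_of (U closure_of S) = {}"

definition first_category_in :: "'a topology \<Rightarrow> 'a set \<Rightarrow> bool" where
  "first_category_in U S \<longleftrightarrow> (\<exists>A :: nat \<Rightarrow> 'a set. (\<forall>n. nowhere_dense_in U (A n)) \<and> S \<subseteq> (\<Union>n. A n))"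

end

theory Submission
  imports Defs
begin

lemma mpt_D:
  assumes "T \<in> MPT M"
  shows "bij_betw T (space M) (space M)" "T \<in> measurable M M"
    "\<And>A. A \<in> sets M \<Longrightarrow> measure M (T -` A \<inter> space M) = measure M A"
proof -
  show b: "bij_betw T (space M) (space M)" and m: "T \<in> measurable M M" using assms by (auto simp: MPT_def)
  have d: "distr M M T = M" using assms by (auto simp: MPT_def)
  fix A assume "A \<in> sets M"
  then have "measure (distr M M T) A = measure M (T -` A \<inter> space M)"
    using m by (simp add: measure_distr)
  then show "measure M (T -` A \<inter> space M) = measure M A" using d by simp
qed

lemma mpt_image:
  assumes "T \<in> MPT M" "A \<in> sets M"
  shows "T ` A \<in> sets M" "measure M (T ` A) = measure M A"
proof -
  have b: "bij_betw T (space M) (space M)" using mpt_D[OF assms(1)] by auto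
  have inj: "inj_on T (space M)" using b by (simp add: bij_betw_def)
  have im: "T ` space M = space M" using b by (simp add: bij_betw_def)
  have Asp: "A \<subseteq> space M" using assms(2) sets.sets_into_space by auto
  have mi: "the_inv_into (space M) T \<in> measurable M M" using assms(1) by (auto simp: MPT_def)
  have eq: "T ` A = the_inv_into (space M) T -` A \<inter> space M"
  proof
    show "T ` A \<subseteq> the_inv_into (space M) T -` A \<inter> space M"
      using Asp inj im by (auto simp: the_inv_into_f_f)
    show "the_inv_into (space M) T -` A \<inter> space M \<subseteq> T ` A"
    proof
      fix y assume y: "y \<in> the_inv_into (space M) T -` A \<inter> space M"
      then have "T (the_inv_into (space M) T y) = y" using inj im by (auto intro: f_the_inv_into_f)
      then show "y \<in> T ` A" using y by (metis IntD1 image_eqI vimageE)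
    qed
  qed
  show s: "T ` A \<in> sets M" unfolding eq using mi assms(2) by (rule measurable_sets)
  have "T -` (T ` A) \<inter> space M = A" using Asp inj by (auto simp: inj_on_def)
  then show "measure M (T ` A) = measure M A" using mpt_D(3)[OF assms(1) s] by simp
qed

lemma mpt_iter:
  assumes "T \<in> MPT M"
  shows "(T ^^ n) \<in> measurable M M \<and> bij_betw (T ^^ n) (space M) (space M)
     \<and> (\<forall>A\<in>sets M. measure M ((T ^^ n) -` A \<inter> space M) = measure M A)
     \<and> (\<forall>A\<in>sets M. (T ^^ n) ` A \<in> sets M \<and> measure M ((T ^^ n) ` A) = measure M A)"
proof (induction n)
  case 0
  then show ?case by (simp add: bij_betw_def)
next
  case (Suc n)
  have Tm: "T \<in> measurable M M" and Tb: "bij_betw T (space M) (space M)"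
    and Tp: "\<And>A. A \<in> sets M \<Longrightarrow> measure M (T -` A \<inter> space M) = measure M A"
    using mpt_D[OF assms] by auto
  have Ti: "\<And>A. A \<in> sets M \<Longrightarrow> T ` A \<in> sets M \<and> measure M (T ` A) = measure M A"
    using mpt_image[OF assms] by auto
  have Sm: "(T ^^ n) \<in> measurable M M" and Sb: "bij_betw (T ^^ n) (space M) (space M)"
    and Sp: "\<And>A. A \<in> sets M \<Longrightarrow> measure M ((T ^^ n) -` A \<inter> space M) = measure M A"
    and Si: "\<And>A. A \<in> sets M \<Longrightarrow> (T ^^ n) ` A \<in> sets M \<and> measure M ((T ^^ n) ` A) = measure M A"
    using Suc.IH by blast+
  have eqf: "T ^^ Suc n = T \<circ> T ^^ n" by simp
  have m: "(T ^^ Suc n) \<in> measurable M M" unfolding eqf using Sm Tm by (rule measurable_comp)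
  have "bij_betw (T \<circ> T ^^ n) (space M) (space M)" using Sb Tb by (rule bij_betw_trans)
  then have b: "bij_betw (T ^^ Suc n) (space M) (space M)" unfolding eqf .
  have p: "measure M ((T ^^ Suc n) -` A \<inter> space M) = measure M A" if A: "A \<in> sets M" for A
  proof -
    have into: "\<And>x. x \<in> space M \<Longrightarrow> (T ^^ n) x \<in> space M" using Sb by (auto simp: bij_betw_def)
    have "(T ^^ Suc n) -` A \<inter> space M = (T ^^ n) -` (T -` A \<inter> space M) \<inter> space M"
      using into by auto
    moreover have s: "T -` A \<inter> space M \<in> sets M" using Tm A by (rule measurable_sets)
    ultimately show ?thesis using Sp[OF s] Tp[OF A] by simp
  qed
  have i: "(T ^^ Suc n) ` A \<in> sets M \<and> measure M ((T ^^ Suc n) ` A) = measure M A" if A: "A \<in> sets M" for A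
  proof -
    have e: "(T ^^ Suc n) ` A = T ` ((T ^^ n) ` A)" by (simp add: image_comp)
    have "(T ^^ n) ` A \<in> sets M" using Si[OF A] by blast
    then show ?thesis unfolding e using Ti Si[OF A] by simp
  qed
  show ?case using m b p i by blast
qed

lemma sd_image:
  assumes "inj_on T S" "X \<subseteq> S" "Y \<subseteq> S"
  shows "(T ` X - T ` Y) \<union> (T ` Y - T ` X) = T ` ((X - Y) \<union> (Y - X))"
  using assms unfolding inj_on_def by blast

lemma (in finite_measure) sd_tri:
  assumes "X \<in> sets M" "Y \<in> sets M" "Z \<in> sets M"
  shows "measure M ((X - Z) \<union> (Z - X)) \<le> measure M ((X - Y) \<union> (Y - X)) + measure M ((Y - Z) \<union> (Z - Y))"
proof -
  have "measure M ((X - Z) \<union> (Z - X)) \<le> measure M (((X - Y) \<union> (Y - X)) \<union> ((Y - Z) \<union> (Z - Y)))"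
    using assms by (intro finite_measure_mono) auto
  also have "\<dots> \<le> measure M ((X - Y) \<union> (Y - X)) + measure M ((Y - Z) \<union> (Z - Y))"
    using assms by (intro measure_Un_le) auto
  finally show ?thesis .
qed

lemma (in finite_measure) sd_lip:
  assumes "X \<in> sets M" "Y \<in> sets M" "B \<in> sets M"
  shows "\<bar>measure M ((X - B) \<union> (B - X)) - measure M ((Y - B) \<union> (B - Y))\<bar> \<le> measure M ((X - Y) \<union> (Y - X))"
proof -
  have 1: "measure M ((X - B) \<union> (B - X)) \<le> measure M ((X - Y) \<union> (Y - X)) + measure M ((Y - B) \<union> (B - Y))"
    using sd_tri assms by blast
  have 2: "measure M ((Y - B) \<union> (B - Y)) \<le> measure M ((Y - X) \<union> (X - Y)) + measure M ((X - B) \<union> (B - X))"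
    using sd_tri assms by blast
  have "(Y - X) \<union> (X - Y) = (X - Y) \<union> (Y - X)" by blast
  then show ?thesis using 1 2 by (simp add: abs_le_iff)
qed

lemma weak_top_space: "topspace (weak_top M) \<subseteq> MPT M"
  unfolding weak_top_def by auto

lemma in_weak_top_space: assumes "T \<in> MPT M" shows "T \<in> topspace (weak_top M)"
proof -
  have "T \<in> {S \<in> MPT M. measure M ((S ` {} - T ` {}) \<union> (T ` {} - S ` {})) < 1}" using assms by simp
  moreover have "{S \<in> MPT M. measure M ((S ` {} - T ` {}) \<union> (T ` {} - S ` {})) < 1} \<in>
    {{S \<in> MPT M. measure M ((S ` E - T ` E) \<union> (T ` E - S ` E)) < e} | T E e.
        T \<in> MPT M \<and> E \<in> sets M \<and> e > 0}"
    by (intro CollectI exI[of _ T] exI[of _ "{}"] exI[of _ "1::real"]) (auto simp: assms)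
  ultimately show ?thesis unfolding weak_top_def topology_generated_by_topspace by blast
qed

lemma weak_cont:
  assumes fm: "finite_measure M" and T: "T \<in> MPT M" and B: "B \<in> sets M"
  shows "e > 0 \<Longrightarrow> \<exists>U. openin (weak_top M) U \<and> T \<in> U \<and>
          (\<forall>S\<in>U. measure M (((S ^^ n) ` B - (T ^^ n) ` B) \<union> ((T ^^ n) ` B - (S ^^ n) ` B)) < e)"
proof (induction n arbitrary: e)
  case 0
  then show ?case using in_weak_top_space[OF T] by (intro exI[of _ "topspace (weak_top M)"]) auto
next
  case (Suc n)
  interpret finite_measure M by (rule fm)
  obtain U where U: "openin (weak_top M) U" "T \<in> U"
     "\<And>S. S\<in>U \<Longrightarrow> measure M (((S ^^ n) ` B - (T ^^ n) ` B) \<union> ((T ^^ n) ` B - (S ^^ n) ` B)) < e/2"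
    using Suc.IH[of "e/2"] Suc.prems by auto
  define G where "G = (T ^^ n) ` B"
  have G: "G \<in> sets M" using mpt_iter[OF T] B unfolding G_def by blast
  define V where "V = {S \<in> MPT M. measure M ((S ` G - T ` G) \<union> (T ` G - S ` G)) < e/2}"
  have Vo: "openin (weak_top M) V" unfolding weak_top_def V_def
    by (rule topology_generated_by_Basis, intro CollectI exI[of _ T] exI[of _ G] exI[of _ "e/2"]) (use T G Suc.prems in simp)
  have TV: "T \<in> V" using T Suc.prems by (simp add: V_def)
  have "\<forall>S\<in>U \<inter> V. measure M (((S ^^ Suc n) ` B - (T ^^ Suc n) ` B) \<union> ((T ^^ Suc n) ` B - (S ^^ Suc n) ` B)) < e"
  proof
    fix S assume S: "S \<in> U \<inter> V"
    then have SM: "S \<in> MPT M" by (simp add: V_def)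
    define X where "X = (S ^^ n) ` B"
    have X: "X \<in> sets M" using mpt_iter[OF SM] B unfolding X_def by blast
    have e1: "(S ^^ Suc n) ` B = S ` X" unfolding X_def by (simp add: image_comp)
    have e2: "(T ^^ Suc n) ` B = T ` G" unfolding G_def by (simp add: image_comp)
    have SX: "S ` X \<in> sets M" "S ` G \<in> sets M" "T ` G \<in> sets M"
      using mpt_image[OF SM X] mpt_image[OF SM G] mpt_image[OF T G] by auto
    have inj: "inj_on S (space M)" using mpt_D(1)[OF SM] by (simp add: bij_betw_def)
    have t1: "measure M ((S ` X - T ` G) \<union> (T ` G - S ` X)) \<le>
        measure M ((S ` X - S ` G) \<union> (S ` G - S ` X)) + measure M ((S ` G - T ` G) \<union> (T ` G - S ` G))"
      using sd_tri SX by blast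
    have t2: "measure M ((S ` X - S ` G) \<union> (S ` G - S ` X)) = measure M ((X - G) \<union> (G - X))"
    proof -
      have "X \<subseteq> space M" "G \<subseteq> space M" using X G sets.sets_into_space by auto
      then have "(S ` X - S ` G) \<union> (S ` G - S ` X) = S ` ((X - G) \<union> (G - X))" using sd_image[OF inj] by blast
      moreover have "(X - G) \<union> (G - X) \<in> sets M" using X G by auto
      ultimately show ?thesis using mpt_image(2)[OF SM] by simp
    qed
    have t3: "measure M ((X - G) \<union> (G - X)) < e/2" using U(3)[of S] S unfolding X_def G_def by blast
    have t4: "measure M ((S ` G - T ` G) \<union> (T ` G - S ` G)) < e/2" using S unfolding V_def by blast
    have "measure M ((S ` X - T ` G) \<union> (T ` G - S ` X)) < e" using t1 t2 t3 t4 by linarith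
    then show "measure M (((S ^^ Suc n) ` B - (T ^^ Suc n) ` B) \<union> ((T ^^ Suc n) ` B - (S ^^ Suc n) ` B)) < e"
      unfolding e1 e2 .
  qed
  note hall = this
  have hop: "openin (weak_top M) (U \<inter> V)" using U(1) Vo by (rule openin_Int)
  have hT: "T \<in> U \<inter> V" using U(2) TV by blast
  show ?case by (rule exI[of _ "U \<inter> V"], intro conjI hop hT hall)
qed

lemma UI_prob: "prob_space UI"
  unfolding UI_def by (rule prob_spaceI) (simp add: emeasure_restrict_space)
lemma space_UI[simp]: "space UI = {0..1}" unfolding UI_def by simp
lemma ZZ_prob: "prob_space ZZ"
  unfolding ZZ_def using UI_prob by (simp add: prob_space_pair)
lemma space_ZZ[simp]: "space ZZ = {0..1} \<times> {0..1}" unfolding ZZ_def by (simp add: space_pair_measure)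

lemma id_UI_meas: "(\<lambda>x. x) \<in> borel_measurable UI"
  unfolding UI_def by (rule measurable_restrict_space1) simp

lemma snd_meas: "snd \<in> borel_measurable ZZ"
  unfolding ZZ_def using measurable_compose[OF measurable_snd id_UI_meas, of UI] by simp

definition BB :: "(real \<times> real) set" where "BB = {0..1} \<times> {0..1/2}"

lemma BB_sets: "BB \<in> sets ZZ"
proof -
  have "{0..1} \<in> sets UI" using sets.top[of UI] by simp
  moreover have "{0..(1/2::real)} \<in> sets UI" unfolding UI_def
    by (subst sets_restrict_space_iff) auto
  ultimately show ?thesis unfolding BB_def ZZ_def by (rule pair_measureI)
qed

definition ff :: "real \<times> real \<Rightarrow> real" where "ff z = (if snd z \<le> 1/2 then 1 else -1)"

lemma ff_meas: "ff \<in> borel_measurable ZZ"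
proof -
  have "{z \<in> space ZZ. snd z \<le> 1/2} \<in> sets ZZ" using snd_meas by measurable
  then show ?thesis unfolding ff_def by measurable
qed

lemma ff_sq: "(ff z)\<^sup>2 = 1" by (simp add: ff_def)

lemma ff_B: "z \<in> space ZZ \<Longrightarrow> ff z = (if z \<in> BB then 1 else -1)"
  by (auto simp: ff_def BB_def)

lemma L1:
  assumes T: "T \<in> MPT ZZ"
  shows "(\<integral>z. (ff ((T ^^ n) z) - ff z)\<^sup>2 \<partial>ZZ) = 4 * measure ZZ (((T ^^ n) ` BB - BB) \<union> (BB - (T ^^ n) ` BB))"
proof -
  interpret prob_space ZZ by (rule ZZ_prob)
  note I = mpt_iter[OF T, of n]
  define C where "C = (T ^^ n) ` BB"
  have C: "C \<in> sets ZZ" using I BB_sets unfolding C_def by blast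
  define D where "D = (T ^^ n) -` ((BB - C) \<union> (C - BB)) \<inter> space ZZ"
  have sdB: "(BB - C) \<union> (C - BB) \<in> sets ZZ" using C BB_sets by auto
  have D: "D \<in> sets ZZ" unfolding D_def using I sdB by (blast intro: measurable_sets)
  have bij: "bij_betw (T ^^ n) (space ZZ) (space ZZ)" using I by blast
  have BBsp: "BB \<subseteq> space ZZ" using BB_sets sets.sets_into_space by blast
  have pt: "(ff ((T ^^ n) z) - ff z)\<^sup>2 = 4 * indicator D z" if z: "z \<in> space ZZ" for z
  proof -
    have w: "(T ^^ n) z \<in> space ZZ" using bij z by (auto simp: bij_betw_def)
    have c: "(T ^^ n) z \<in> C \<longleftrightarrow> z \<in> BB"
      using bij z BBsp unfolding C_def bij_betw_def inj_on_def by blast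
    show ?thesis using w z c by (auto simp: ff_B D_def indicator_def)
  qed
  have "(\<integral>z. (ff ((T ^^ n) z) - ff z)\<^sup>2 \<partial>ZZ) = (\<integral>z. 4 * indicator D z \<partial>ZZ)"
    apply (rule Bochner_Integration.integral_cong) using pt by auto
  also have "\<dots> = 4 * measure ZZ D"
  proof -
    have Dsp: "D \<subseteq> {0..1} \<times> {0..1}" unfolding D_def by auto
    then have "D \<inter> ({0..1} \<times> {0..1}) = D" by blast
    then show ?thesis using D by simp
  qed
  also have "measure ZZ D = measure ZZ ((BB - C) \<union> (C - BB))" unfolding D_def using I sdB by blast
  also have "(BB - C) \<union> (C - BB) = (C - BB) \<union> (BB - C)" by blast
  finally show ?thesis unfolding C_def .
qed

lemma fst_meas_UI: "fst \<in> measurable ZZ UI" unfolding ZZ_def by (rule measurable_fst)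

lemma Xalg_sets: "sets Xalg = {fst -` A \<inter> space ZZ | A. A \<in> sets UI}"
  unfolding Xalg_def by (rule sets_vimage_algebra2) auto

lemma Xalg_subalg: "subalgebra ZZ Xalg"
  unfolding subalgebra_def
proof
  show "space Xalg = space ZZ" unfolding Xalg_def by simp
  show "sets Xalg \<subseteq> sets ZZ" unfolding Xalg_sets using measurable_sets[OF fst_meas_UI] by blast
qed

lemma Xalg_sfs: "sigma_finite_subalgebra ZZ Xalg"
proof -
  interpret prob_space ZZ by (rule ZZ_prob)
  show ?thesis
    by (rule finite_measure_subalgebra_is_sigma_finite[OF finite_measure_subalgebra.intro])
       (unfold_locales, rule Xalg_subalg)
qed

lemma var_ineq:
  fixes g :: "'a \<Rightarrow> real"
  assumes "prob_space M" "integrable M g" "integrable M (\<lambda>x. (g x)\<^sup>2)"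
  shows "\<bar>integral\<^sup>L M g\<bar> \<le> sqrt (\<integral>x. (g x)\<^sup>2 \<partial>M)"
proof -
  interpret prob_space M by fact
  have "0 \<le> variance g" by (rule variance_positive)
  then have "(integral\<^sup>L M g)\<^sup>2 \<le> (\<integral>x. (g x)\<^sup>2 \<partial>M)" using variance_eq[OF assms(2,3)] by simp
  then show ?thesis using real_sqrt_le_mono by fastforce
qed

lemma int_h: "(\<integral>y. (if y \<le> 1/2 then 1 else -1::real) \<partial>UI) = 0"
proof -
  interpret prob_space UI by (rule UI_prob)
  have s: "{0..(1/2::real)} \<in> sets UI" unfolding UI_def by (subst sets_restrict_space_iff) auto
  have "(\<integral>y. (if y \<le> 1/2 then 1 else -1::real) \<partial>UI) = (\<integral>y. 2 * indicator {0..1/2} y - 1 \<partial>UI)"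
    by (rule Bochner_Integration.integral_cong) (auto simp: indicator_def)
  also have "\<dots> = 2 * measure UI {0..1/2} - 1"
  proof -
    have i1: "integrable UI (\<lambda>y. 2 * indicator {0..1/2} y :: real)"
      using s by (intro integrable_mult_right integrable_real_indicator) (auto simp: emeasure_eq_measure)
    have "(\<integral>y. 2 * indicator {0..1/2} y - 1 \<partial>UI) = (\<integral>y. 2 * indicator {0..1/2} y \<partial>UI) - (\<integral>y. 1 \<partial>UI :: real)"
      by (rule Bochner_Integration.integral_diff[OF i1]) simp
    moreover have "prob {0..1} = 1" using prob_space space_UI by metis
    ultimately show ?thesis using s by simp
  qed
  also have "measure UI {0..1/2} = measure lborel {0..(1/2::real)}"
    unfolding UI_def by (rule measure_restrict_space) auto
  also have "\<dots> = 1/2" by simp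
  finally show ?thesis by simp
qed

lemma ce_ff_zero: "AE z in ZZ. real_cond_exp ZZ Xalg ff z = 0"
proof -
  interpret S: sigma_finite_subalgebra ZZ Xalg by (rule Xalg_sfs)
  interpret P: prob_space ZZ by (rule ZZ_prob)
  interpret U: prob_space UI by (rule UI_prob)
  interpret PS: pair_sigma_finite UI UI by unfold_locales
  have ffi: "integrable ZZ ff"
    by (rule P.integrable_const_bound[where B=1]) (auto simp: ff_def ff_meas)
  show ?thesis
  proof (rule S.real_cond_exp_charact)
    fix A assume "A \<in> sets Xalg"
    then obtain A' where A': "A' \<in> sets UI" "A = fst -` A' \<inter> space ZZ" unfolding Xalg_sets by blast
    have mi: "(\<lambda>z. indicator A' (fst z) :: real) \<in> borel_measurable ZZ"
      using measurable_compose[OF fst_meas_UI borel_measurable_indicator[OF A'(1)]] by simp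
    have mp: "(\<lambda>z. indicator A' (fst z) * ff z) \<in> borel_measurable ZZ"
      using mi ff_meas by (rule borel_measurable_times)
    have ip: "integrable ZZ (\<lambda>z. indicator A' (fst z) * ff z)"
      by (rule P.integrable_const_bound[where B=1], simp add: ff_def indicator_def, rule mp)
    have eqf: "(\<lambda>(x, y). indicator A' x * (if y \<le> 1/2 then 1 else -1::real)) = (\<lambda>z. indicator A' (fst z) * ff z)"
      by (auto simp: ff_def)
    have "(\<integral>x\<in>A. ff x \<partial>ZZ) = (\<integral>z. (\<lambda>(x, y). indicator A' x * (if y \<le> 1/2 then 1 else -1::real)) z \<partial>ZZ)"
      unfolding set_lebesgue_integral_def eqf
      by (rule Bochner_Integration.integral_cong) (auto simp: A' ff_def indicator_def)
    also have "\<dots> = (\<integral>x. (\<integral>y. indicator A' x * (if y \<le> 1/2 then 1 else -1::real) \<partial>UI) \<partial>UI)"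
      unfolding ZZ_def
    proof (rule PS.integral_fst[symmetric])
      show "integrable (UI \<Otimes>\<^sub>M UI) (\<lambda>(x, y). indicator A' x * (if y \<le> 1/2 then 1 else -1::real))"
        using ip unfolding eqf ZZ_def .
    qed
    also have "\<dots> = 0" using int_h by simp
    finally show "(\<integral>x\<in>A. ff x \<partial>ZZ) = (\<integral>x\<in>A. 0 \<partial>ZZ)" by simp
  qed (auto simp: ffi)
qed

definition fc :: "real \<times> real \<Rightarrow> complex" where "fc z = complex_of_real (ff z)"

definition dd :: "(real \<times> real \<Rightarrow> real \<times> real) \<Rightarrow> nat \<Rightarrow> real" where
  "dd T n = measure ZZ (((T ^^ n) ` BB - BB) \<union> (BB - (T ^^ n) ` BB))"

lemma fc_meas: "fc \<in> borel_measurable ZZ"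
  unfolding fc_def using ff_meas by measurable

lemma cmod_fc: "cmod (fc a - fc b) ^ 2 = (ff a - ff b)\<^sup>2"
proof -
  have "fc a - fc b = complex_of_real (ff a - ff b)" by (simp add: fc_def)
  then show ?thesis by (simp only: norm_of_real power2_abs)
qed

lemma cmod_fc1: "(cmod (fc a))\<^sup>2 = 1"
  by (simp add: fc_def ff_def)

lemma L2rel_fc: "L2rel fc"
proof -
  interpret S: sigma_finite_subalgebra ZZ Xalg by (rule Xalg_sfs)
  interpret P: prob_space ZZ by (rule ZZ_prob)
  have e: "(\<lambda>z. (cmod (fc z))\<^sup>2) = (\<lambda>z. 1)" by (simp add: cmod_fc1)
  have "AE z in ZZ. real_cond_exp ZZ Xalg (\<lambda>w. (cmod (fc w))\<^sup>2) z \<le> 1"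
    unfolding e by (rule S.real_cond_exp_le_c) auto
  then show ?thesis unfolding L2rel_def using fc_meas e by auto
qed

lemma rigid_dd:
  assumes T: "T \<in> MPT ZZ" and r: "rigid ZZ T"
  shows "\<exists>n. strict_mono n \<and> (\<lambda>k. dd T (n k)) \<longlonglongrightarrow> 0"
proof -
  interpret P: prob_space ZZ by (rule ZZ_prob)
  obtain n where n: "strict_mono n" and lim: "(\<lambda>k. sqrt (\<integral>x. (cmod (fc ((T ^^ n k) x) - fc x))\<^sup>2 \<partial>ZZ)) \<longlonglongrightarrow> 0"
    using r fc_meas unfolding rigid_def by (auto simp: cmod_fc1)
  have "(\<lambda>k. sqrt (\<integral>x. (cmod (fc ((T ^^ n k) x) - fc x))\<^sup>2 \<partial>ZZ)) = (\<lambda>k. sqrt (4 * dd T (n k)))"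
    by (simp only: cmod_fc L1[OF T] dd_def)
  with lim have l2: "(\<lambda>k. sqrt (4 * dd T (n k))) \<longlonglongrightarrow> 0" by simp
  have "(\<lambda>k. (sqrt (4 * dd T (n k)))\<^sup>2 / 4) \<longlonglongrightarrow> 0\<^sup>2 / 4"
    by (intro tendsto_intros l2) simp
  moreover have "(sqrt (4 * dd T (n k)))\<^sup>2 / 4 = dd T (n k)" for k
    by (simp add: dd_def)
  ultimately show ?thesis using n by auto
qed

lemma ce_meas: "cond_exp_c ZZ Xalg h \<in> borel_measurable ZZ"
  unfolding cond_exp_c_def by measurable

lemma phi_meas:
  assumes T0: "T0 \<in> MPT UI"
  shows "(\<lambda>z. ((T0 ^^ n) (fst z), snd z)) \<in> measurable ZZ ZZ"
proof -
  have "(T0 ^^ n) \<in> measurable UI UI" using mpt_iter[OF T0] by blast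
  then have a: "(\<lambda>z. (T0 ^^ n) (fst z)) \<in> measurable ZZ UI"
    using measurable_compose[OF fst_meas_UI] by blast
  have b: "snd \<in> measurable ZZ UI" unfolding ZZ_def by (rule measurable_snd)
  show ?thesis using measurable_Pair[OF a b] unfolding ZZ_def .
qed

lemma mix_dd:
  assumes T0: "T0 \<in> MPT UI" and T: "T \<in> MPT ZZ" and mx: "mixing_ext T0 T"
  shows "(\<lambda>n. dd T n) \<longlonglongrightarrow> 1/2"
proof -
  interpret S: sigma_finite_subalgebra ZZ Xalg by (rule Xalg_sfs)
  interpret P: prob_space ZZ by (rule ZZ_prob)
  define J where "J n z = (cmod (cond_exp_c ZZ Xalg (\<lambda>w. fc ((T ^^ n) w) * cnj (fc w)) z
                         - cond_exp_c ZZ Xalg fc ((T0 ^^ n) (fst z), snd z)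
                           * cond_exp_c ZZ Xalg (\<lambda>w. cnj (fc w)) z))\<^sup>2" for n z
  have lim: "(\<lambda>n. sqrt (\<integral>z. J n z \<partial>ZZ)) \<longlonglongrightarrow> 0"
    using mx L2rel_fc unfolding mixing_ext_def J_def by blast
  define v where "v n w = ff ((T ^^ n) w) * ff w" for n w
  define rv where "rv n = real_cond_exp ZZ Xalg (v n)" for n
  define r0 where "r0 = real_cond_exp ZZ Xalg (\<lambda>_. 0::real)"
  have vm: "v n \<in> borel_measurable ZZ" for n
  proof -
    have "(T ^^ n) \<in> measurable ZZ ZZ" using mpt_iter[OF T] by blast
    then have "(\<lambda>w. ff ((T ^^ n) w)) \<in> borel_measurable ZZ" using measurable_compose ff_meas by blast
    then show ?thesis unfolding v_def using ff_meas by (intro borel_measurable_times) 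
  qed
  have vb: "\<bar>v n w\<bar> \<le> 1" for n w by (simp add: v_def ff_def)
  have vle: "v n w \<le> 1" "-1 \<le> v n w" for n w using vb[of n w] by linarith+
  have vi: "integrable ZZ (v n)" for n
    by (rule P.integrable_const_bound[where B=1]) (use vb vm in auto)
  have r0z: "AE z in ZZ. r0 z = 0" unfolding r0_def by (rule S.real_cond_exp_F_meas) auto
  have rfz: "AE z in ZZ. real_cond_exp ZZ Xalg ff z = 0" by (rule ce_ff_zero)
  have e1: "cond_exp_c ZZ Xalg (\<lambda>w. fc ((T ^^ n) w) * cnj (fc w)) z
        = complex_of_real (rv n z) + \<i> * complex_of_real (r0 z)" for n z
  proof -
    have a: "(\<lambda>x. Re (fc ((T ^^ n) x) * cnj (fc x))) = v n" by (simp add: fc_def v_def fun_eq_iff)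
    have b: "(\<lambda>x. Im (fc ((T ^^ n) x) * cnj (fc x))) = (\<lambda>_. 0)" by (simp add: fc_def fun_eq_iff)
    show ?thesis unfolding cond_exp_c_def a b rv_def r0_def ..
  qed
  have e3: "cond_exp_c ZZ Xalg (\<lambda>w. cnj (fc w)) z
        = complex_of_real (real_cond_exp ZZ Xalg ff z) + \<i> * complex_of_real (r0 z)" for z
  proof -
    have a: "(\<lambda>x. Re (cnj (fc x))) = ff" by (simp add: fc_def fun_eq_iff)
    have b: "(\<lambda>x. Im (cnj (fc x))) = (\<lambda>_. 0)" by (simp add: fc_def fun_eq_iff)
    show ?thesis unfolding cond_exp_c_def a b r0_def ..
  qed
  have Jae: "AE z in ZZ. J n z = (rv n z)\<^sup>2" for n
    using r0z rfz
  proof eventually_elim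
    case (elim z)
    then show ?case unfolding J_def e1 e3 by (simp only: norm_of_real power2_abs) simp
  qed
  have Jm: "J n \<in> borel_measurable ZZ" for n
  proof -
    have [measurable]: "(\<lambda>z. cond_exp_c ZZ Xalg fc ((T0 ^^ n) (fst z), snd z)) \<in> borel_measurable ZZ"
      using measurable_compose[OF phi_meas[OF T0] ce_meas] by simp
    have [measurable]: "cond_exp_c ZZ Xalg h \<in> borel_measurable ZZ" for h by (rule ce_meas)
    show ?thesis unfolding J_def[abs_def] by measurable
  qed
  have rvm: "rv n \<in> borel_measurable ZZ" for n unfolding rv_def by measurable
  have rvb: "AE z in ZZ. \<bar>rv n z\<bar> \<le> 1" for n
  proof -
    have "AE z in ZZ. rv n z \<le> 1" unfolding rv_def
      by (rule S.real_cond_exp_le_c) (use vi vle in auto)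
    moreover have "AE z in ZZ. rv n z \<ge> -1" unfolding rv_def
      by (rule S.real_cond_exp_ge_c) (use vi vle in auto)
    ultimately show ?thesis by eventually_elim auto
  qed
  have rvi: "integrable ZZ (rv n)" for n unfolding rv_def using vi by (rule S.real_cond_exp_int(1))
  have rv2i: "integrable ZZ (\<lambda>z. (rv n z)\<^sup>2)" for n
  proof (rule P.integrable_const_bound[where B=1])
    show "AE x in ZZ. norm ((rv n x)\<^sup>2) \<le> 1" using rvb[of n]
    proof eventually_elim
      case (elim x)
      have "\<bar>rv n x\<bar>\<^sup>2 \<le> 1" using elim by (intro power_le_one) auto
      then show ?case by simp
    qed
    show "(\<lambda>z. (rv n z)\<^sup>2) \<in> borel_measurable ZZ" using rvm by measurable
  qed
  have intJ: "(\<integral>z. J n z \<partial>ZZ) = (\<integral>z. (rv n z)\<^sup>2 \<partial>ZZ)" for n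
    by (rule integral_cong_AE) (use Jm rvm Jae in auto)
  have intv: "(\<integral>z. v n z \<partial>ZZ) = 1 - 2 * dd T n" for n
  proof -
    define g where "g z = (ff ((T ^^ n) z) - ff z)\<^sup>2" for z
    have gm: "g \<in> borel_measurable ZZ"
    proof -
      have "(T ^^ n) \<in> measurable ZZ ZZ" using mpt_iter[OF T] by blast
      then have "(\<lambda>w. ff ((T ^^ n) w)) \<in> borel_measurable ZZ" using measurable_compose ff_meas by blast
      then show ?thesis unfolding g_def using ff_meas by measurable
    qed
    have gi: "integrable ZZ g"
      by (rule P.integrable_const_bound[where B=4]) (auto simp: g_def ff_def gm)
    have pv: "v n z = 1 - g z / 2" for z by (simp add: v_def g_def ff_def power2_eq_square)
    have "(\<integral>z. v n z \<partial>ZZ) = (\<integral>z. 1 - g z / 2 \<partial>ZZ)" by (simp add: pv)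
    also have "\<dots> = (\<integral>z. 1 \<partial>ZZ) - (\<integral>z. g z / 2 \<partial>ZZ)"
      by (rule Bochner_Integration.integral_diff) (use gi in auto)
    also have "\<dots> = 1 - (\<integral>z. g z \<partial>ZZ) / 2"
    proof -
      have "measure ZZ (space ZZ) = 1" by (rule P.prob_space)
      then have "measure ZZ ({0..1} \<times> {0..1}) = 1" by simp
      then show ?thesis by simp
    qed
    also have "(\<integral>z. g z \<partial>ZZ) = 4 * dd T n" unfolding g_def dd_def by (rule L1[OF T])
    finally show ?thesis by simp
  qed
  have bound: "norm (dd T n - 1/2) \<le> sqrt (\<integral>z. J n z \<partial>ZZ) / 2" for n
  proof -
    have "\<bar>\<integral>z. rv n z \<partial>ZZ\<bar> \<le> sqrt (\<integral>z. (rv n z)\<^sup>2 \<partial>ZZ)"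
      by (rule var_ineq[OF ZZ_prob rvi rv2i])
    moreover have "(\<integral>z. rv n z \<partial>ZZ) = (\<integral>z. v n z \<partial>ZZ)" unfolding rv_def using vi by (rule S.real_cond_exp_int(2))
    ultimately have h: "\<bar>1 - 2 * dd T n\<bar> \<le> sqrt (\<integral>z. J n z \<partial>ZZ)" using intv[of n] intJ[of n] by simp
    have "norm (dd T n - 1/2) = \<bar>1 - 2 * dd T n\<bar> / 2" by (cases "dd T n \<le> 1/2") auto
    then show ?thesis using h by simp
  qed
  have l0: "(\<lambda>n. sqrt (\<integral>z. J n z \<partial>ZZ) / 2) \<longlonglongrightarrow> 0"
    using tendsto_divide[OF lim tendsto_const[of 2]] by simp
  have ev: "eventually (\<lambda>n. norm (dd T n - 1/2) \<le> sqrt (\<integral>z. J n z \<partial>ZZ) / 2) sequentially"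
    by (intro always_eventually allI bound)
  have "(\<lambda>n. dd T n - 1/2) \<longlonglongrightarrow> 0" by (rule Lim_null_comparison[OF ev l0])
  then show ?thesis by (simp add: LIM_zero_iff)
qed

theorem lemma3p2:
  fixes T0 :: "real \<Rightarrow> real"
  assumes "T0 \<in> MPT UI"
    and "(subtopology (weak_top ZZ) (ext_set T0)) closure_of (rigid_set ZZ \<inter> ext_set T0)
           = topspace (subtopology (weak_top ZZ) (ext_set T0))"
  shows "first_category_in (subtopology (weak_top ZZ) (ext_set T0)) (mixing_ext_set T0)"
proof -
  interpret P: prob_space ZZ by (rule ZZ_prob)
  have fm: "finite_measure ZZ" by unfold_locales
  define G where "G = subtopology (weak_top ZZ) (ext_set T0)"
  have tG: "topspace G = topspace (weak_top ZZ) \<inter> ext_set T0" unfolding G_def by simp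
  have tGM: "topspace G \<subseteq> MPT ZZ" using tG weak_top_space by blast
  define A where "A N = {T \<in> topspace G. \<forall>n\<ge>N. dd T n \<ge> 1/4}" for N
  have cover: "mixing_ext_set T0 \<subseteq> (\<Union>N. A N)"
  proof
    fix T assume T: "T \<in> mixing_ext_set T0"
    then have Te: "T \<in> ext_set T0" and Tm: "mixing_ext T0 T" by (auto simp: mixing_ext_set_def)
    then have TM: "T \<in> MPT ZZ" by (simp add: ext_set_def)
    have "(\<lambda>n. dd T n) \<longlonglongrightarrow> 1/2" by (rule mix_dd[OF assms(1) TM Tm])
    then have "eventually (\<lambda>n. dd T n > 1/4) sequentially" by (rule order_tendstoD) simp
    then obtain N where N: "\<And>n. n \<ge> N \<Longrightarrow> dd T n > 1/4" unfolding eventually_sequentially by blast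
    have "T \<in> topspace G" using tG Te in_weak_top_space[OF TM] by blast
    then have "T \<in> A N" using N unfolding A_def by (auto intro: less_imp_le)
    then show "T \<in> (\<Union>N. A N)" by blast
  qed
  have nd: "nowhere_dense_in G (A N)" for N
    unfolding nowhere_dense_in_def
  proof
    show "A N \<subseteq> topspace G" unfolding A_def by blast
    show "G interior_of (G closure_of A N) = {}"
    proof (rule ccontr)
      assume "G interior_of (G closure_of A N) \<noteq> {}"
      then obtain x W where W: "openin G W" "x \<in> W" "W \<subseteq> G closure_of A N"
        unfolding interior_of_def by blast
      have "x \<in> topspace G" using W openin_subset by blast
      then have "x \<in> G closure_of (rigid_set ZZ \<inter> ext_set T0)" using assms(2) unfolding G_def by simp
      then obtain y where y: "y \<in> rigid_set ZZ \<inter> ext_set T0" "y \<in> W"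
        using W unfolding in_closure_of by blast
      have yM: "y \<in> MPT ZZ" and yr: "rigid ZZ y" using y by (auto simp: rigid_set_def)
      have ycl: "y \<in> G closure_of A N" using y W by blast
      obtain n where n: "strict_mono n" and ln: "(\<lambda>k. dd y (n k)) \<longlonglongrightarrow> 0"
        using rigid_dd[OF yM yr] by blast
      have "eventually (\<lambda>k. dd y (n k) < 1/4) sequentially" using ln by (rule order_tendstoD) simp
      then obtain K where K: "\<And>k. k \<ge> K \<Longrightarrow> dd y (n k) < 1/4" unfolding eventually_sequentially by blast
      define m where "m = n (max K N)"
      have mN: "m \<ge> N" unfolding m_def using seq_suble[OF n, of "max K N"] by simp
      have dym: "dd y m < 1/4" unfolding m_def using K by simp
      obtain U where U: "openin (weak_top ZZ) U" "y \<in> U"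
        "\<And>S. S\<in>U \<Longrightarrow> measure ZZ (((S ^^ m) ` BB - (y ^^ m) ` BB) \<union> ((y ^^ m) ` BB - (S ^^ m) ` BB)) < 1/4 - dd y m"
        using weak_cont[OF fm yM BB_sets, of "1/4 - dd y m" m] dym by auto
      have "openin G (U \<inter> ext_set T0)" unfolding G_def openin_subtopology using U(1) by blast
      moreover have "y \<in> U \<inter> ext_set T0" using U(2) y by blast
      ultimately obtain S where S: "S \<in> A N" "S \<in> U" using ycl unfolding in_closure_of by blast
      have SM: "S \<in> MPT ZZ" using S tGM unfolding A_def by blast
      have dS: "dd S m \<ge> 1/4" using S mN unfolding A_def by blast
      have X: "(S ^^ m) ` BB \<in> sets ZZ" using mpt_iter[OF SM] BB_sets by blast
      have Y: "(y ^^ m) ` BB \<in> sets ZZ" using mpt_iter[OF yM] BB_sets by blast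
      have "\<bar>dd S m - dd y m\<bar> \<le> measure ZZ (((S ^^ m) ` BB - (y ^^ m) ` BB) \<union> ((y ^^ m) ` BB - (S ^^ m) ` BB))"
        unfolding dd_def by (rule P.sd_lip[OF X Y BB_sets])
      with U(3)[OF S(2)] dS dym show False by linarith
    qed
  qed
  show ?thesis unfolding first_category_in_def G_def[symmetric] using nd cover by blast
qed

end
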